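(* Let $A$ be (the matrix of) a te-lace with at least three rows and let $p=(i,j)$ be a pivot of $A$. Then the rows of $A/\!\!/p$ form a te-lace.
   Context: A set of vectors is identified with the matrix whose rows are these vectors. A matrix is totally equimodular if every set of linearly independent rows forms a matrix of full row rank whose nonzero maximal minors all have the same absolute value, and totally unimodular if all its square submatrices have determinant in $\{0,\pm1\}$. A linearly independent set of $\{0,\pm1\}$-vectors is a te-set if its matrix is totally equimodular, a tu-set if its matrix is totally unimodular, and a te-lace if it is a te-set, not a tu-set, and all its proper subsets are tu-sets. A pivot of $A$ is a position $p=(i,j)$ with $A_i^j\neq0$; $A/p$ is obtained by dividing row $i$ by $A_i^j$ and adding multiples of it to the other rows so that column $j$ becomes the $i$-th unit vector; the trim $A/\!\!/p$ is obtained from $A/p$ by deleting row $i$ and column $j$. *)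

theory Defs
  imports "Jordan_Normal_Form.Determinant" "Jordan_Normal_Form.DL_Submatrix"
begin

text \<open>Matrices are real matrices of the Jordan_Normal_Form library; a finite set of
  vectors is identified with the matrix whose rows are these vectors.\<close>

definition zero_pm_one :: "real mat \<Rightarrow> bool" where
  "zero_pm_one A \<longleftrightarrow> (\<forall>i<dim_row A. \<forall>j<dim_col A. A $$ (i,j) \<in> {-1, 0, 1})"

definition lin_indep_rows :: "real mat \<Rightarrow> bool" where
  "lin_indep_rows A \<longleftrightarrow>
     (\<forall>c :: nat \<Rightarrow> real. (\<forall>j<dim_col A. (\<Sum>i<dim_row A. c i * A $$ (i,j)) = 0)
        \<longrightarrow> (\<forall>i<dim_row A. c i = 0))"

definition rows_of :: "real mat \<Rightarrow> nat set \<Rightarrow> real mat" where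
  "rows_of A R = submatrix A R {0..<dim_col A}"

definition totally_equimodular :: "real mat \<Rightarrow> bool" where
  "totally_equimodular A \<longleftrightarrow>
     (\<forall>R \<subseteq> {0..<dim_row A}. lin_indep_rows (rows_of A R) \<longrightarrow>
        (\<forall>J1 J2. J1 \<subseteq> {0..<dim_col A} \<and> J2 \<subseteq> {0..<dim_col A} \<and>
                 card J1 = card R \<and> card J2 = card R \<and>
                 det (submatrix A R J1) \<noteq> 0 \<and> det (submatrix A R J2) \<noteq> 0 \<longrightarrow>
                 \<bar>det (submatrix A R J1)\<bar> = \<bar>det (submatrix A R J2)\<bar>))"

definition totally_unimodular :: "real mat \<Rightarrow> bool" where
  "totally_unimodular A \<longleftrightarrow>
     (\<forall>I J. I \<subseteq> {0..<dim_row A} \<and> J \<subseteq> {0..<dim_col A} \<and> card I = card J \<longrightarrow>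
        det (submatrix A I J) \<in> {-1, 0, 1})"

definition te_set :: "real mat \<Rightarrow> bool" where
  "te_set A \<longleftrightarrow> zero_pm_one A \<and> lin_indep_rows A \<and> totally_equimodular A"

definition tu_set :: "real mat \<Rightarrow> bool" where
  "tu_set A \<longleftrightarrow> zero_pm_one A \<and> lin_indep_rows A \<and> totally_unimodular A"

definition te_lace :: "real mat \<Rightarrow> bool" where
  "te_lace A \<longleftrightarrow> te_set A \<and> \<not> tu_set A \<and>
     (\<forall>R. R \<subset> {0..<dim_row A} \<longrightarrow> tu_set (rows_of A R))"

definition pivot_mat :: "real mat \<Rightarrow> nat \<Rightarrow> nat \<Rightarrow> real mat" where
  "pivot_mat A i j = mat (dim_row A) (dim_col A)
     (\<lambda>(r,c). if r = i then A $$ (i,c) / A $$ (i,j)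
             else A $$ (r,c) - (A $$ (r,j) / A $$ (i,j)) * A $$ (i,c))"

text \<open>The trim A//p: delete row i and column j of A/p.\<close>
definition trim_mat :: "real mat \<Rightarrow> nat \<Rightarrow> nat \<Rightarrow> real mat" where
  "trim_mat A i j = mat (dim_row A - 1) (dim_col A - 1)
     (\<lambda>(r,c). pivot_mat A i j $$ (if r < i then r else Suc r, if c < j then c else Suc c))"

end

theory Submission
  imports Defs
begin

definition sm :: "'a mat \<Rightarrow> nat list \<Rightarrow> nat list \<Rightarrow> 'a mat" where
  "sm A rs cs = mat (length rs) (length cs) (\<lambda>(a,b). A $$ (rs!a, cs!b))"

definition pl :: "nat set \<Rightarrow> nat list" where
  "pl I = map (pick I) [0..<card I]"

lemma sm_dim[simp]: "dim_row (sm A rs cs) = length rs" "dim_col (sm A rs cs) = length cs"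
  by (auto simp: sm_def)

lemma sm_index[simp]: "a < length rs \<Longrightarrow> b < length cs \<Longrightarrow> sm A rs cs $$ (a,b) = A $$ (rs!a, cs!b)"
  by (auto simp: sm_def)

lemma pl_length[simp]: "length (pl I) = card I" by (simp add: pl_def)

lemma pl_distinct: "distinct (pl I)"
  unfolding pl_def distinct_map
  by (auto simp: inj_on_def) (metis nat_neq_iff pick_mono_le)

lemma pl_set: assumes "finite I" shows "set (pl I) = I"
proof
  show "set (pl I) \<subseteq> I" unfolding pl_def using pick_in_set_le by auto
  show "I \<subseteq> set (pl I)"
  proof
    fix x assume x: "x \<in> I"
    have "{a\<in>I. a < x} \<subset> I" using x by auto
    hence "card {a\<in>I. a < x} < card I" using assms psubset_card_mono by blast
    thus "x \<in> set (pl I)" unfolding pl_def set_map set_upt using pick_card_in_set[OF x]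
      by (intro image_eqI[where x="card {a\<in>I. a<x}"]) auto
  qed
qed

lemma submatrix_sm: assumes "I \<subseteq> {0..<dim_row A}" "J \<subseteq> {0..<dim_col A}"
  shows "submatrix A I J = sm A (pl I) (pl J)"
proof -
  have 1: "{i. i<dim_row A \<and> i\<in>I} = I" "{j. j<dim_col A \<and> j\<in>J} = J" using assms by auto
  show ?thesis unfolding submatrix_def sm_def 1 pl_def by (auto intro!: eq_matI)
qed

fun idx :: "'a list \<Rightarrow> 'a \<Rightarrow> nat" where
  "idx [] x = 0" | "idx (y#ys) x = (if x = y then 0 else Suc (idx ys x))"

lemma idx_less: "x \<in> set xs \<Longrightarrow> idx xs x < length xs"
  by (induction xs) auto

lemma idx_nth: "x \<in> set xs \<Longrightarrow> xs ! idx xs x = x"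
  by (induction xs) auto

lemma idx_distinct: "distinct xs \<Longrightarrow> q < length xs \<Longrightarrow> idx xs (xs!q) = q"
  by (induction xs arbitrary: q) (auto simp: nth_Cons' nth_mem)

lemma abs_sign_of: "\<bar>(of_int (sign p) :: real)\<bar> = 1"
  by (cases rule: sign_cases[of p]) auto

lemma index_perm:
  assumes d: "distinct rs" "distinct rs'" and st: "set rs = set rs'"
  defines "p \<equiv> \<lambda>k. if k < length rs then idx rs (rs' ! k) else k"
  shows "p permutes {0..<length rs}" and "\<And>k. k < length rs \<Longrightarrow> rs ! (p k) = rs' ! k"
proof -
  have len: "length rs' = length rs" using d st distinct_card by metis
  have inj: "inj_on p {0..<length rs}"
  proof (rule inj_onI)
    fix x y assume xy: "x \<in> {0..<length rs}" "y \<in> {0..<length rs}" "p x = p y"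
    hence "idx rs (rs' ! x) = idx rs (rs' ! y)" unfolding p_def by auto
    moreover have "rs' ! x \<in> set rs" "rs' ! y \<in> set rs" using xy len st by auto
    ultimately have "rs' ! x = rs' ! y" by (metis idx_nth)
    thus "x = y" using nth_eq_iff_index_eq[OF d(2), of x y] xy len by auto
  qed
  have into: "p ` {0..<length rs} \<subseteq> {0..<length rs}"
    unfolding p_def using len st by (auto intro!: idx_less)
  have "bij_betw p {0..<length rs} {0..<length rs}"
    using inj into by (simp add: bij_betw_def card_subset_eq inj_on_finite card_image)
  thus "p permutes {0..<length rs}" by (rule bij_imp_permutes) (auto simp: p_def)
  show "\<And>k. k < length rs \<Longrightarrow> rs ! (p k) = rs' ! k"
    unfolding p_def using len st by (auto intro: idx_nth)
qed

lemma sm_perm_rows: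
  assumes d: "distinct rs" "distinct rs'" and st: "set rs = set rs'" and l: "length cs = length rs"
  shows "\<bar>det (sm (A::real mat) rs' cs)\<bar> = \<bar>det (sm A rs cs)\<bar>"
proof -
  define p where "p \<equiv> \<lambda>k. if k < length rs then idx rs (rs' ! k) else k"
  note pp = index_perm[OF d st, folded p_def]
  have len: "length rs' = length rs" using d st distinct_card by metis
  have pe: "\<And>k. k < length rs \<Longrightarrow> rs ! p k = rs' ! k" using index_perm(2)[OF d st] unfolding p_def by auto
  have M: "sm A rs cs \<in> carrier_mat (length rs) (length rs)" using l by auto
  have "sm A rs' cs = mat (length rs) (length rs) (\<lambda>(i,j). sm A rs cs $$ (p i, j))"
    using pp(1) len l by (auto intro!: eq_matI simp: pe permutes_in_image)
  hence "det (sm A rs' cs) = signof p * det (sm A rs cs)"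
    using det_permute_rows[OF M pp(1)] by simp
  thus ?thesis by (simp add: abs_mult abs_sign_of)
qed

lemma sm_perm_cols:
  assumes d: "distinct cs" "distinct cs'" and st: "set cs = set cs'" and l: "length rs = length cs"
  shows "\<bar>det (sm (A::real mat) rs cs')\<bar> = \<bar>det (sm A rs cs)\<bar>"
proof -
  define p where "p \<equiv> \<lambda>k. if k < length cs then idx cs (cs' ! k) else k"
  note pp = index_perm[OF d st, folded p_def]
  have len: "length cs' = length cs" using d st distinct_card by metis
  have pe: "\<And>k. k < length cs \<Longrightarrow> cs ! p k = cs' ! k" using index_perm(2)[OF d st] unfolding p_def by auto
  have M: "transpose_mat (sm A rs cs) \<in> carrier_mat (length cs) (length cs)" using l by auto
  have "transpose_mat (sm A rs cs') = mat (length cs) (length cs) (\<lambda>(i,j). transpose_mat (sm A rs cs) $$ (p i, j))"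
    using pp(1) len l by (auto intro!: eq_matI simp: pe permutes_in_image)
  hence "det (transpose_mat (sm A rs cs')) = signof p * det (transpose_mat (sm A rs cs))"
    using det_permute_rows[OF M pp(1)] by simp
  moreover have "det (transpose_mat (sm A rs cs')) = det (sm A rs cs')"
    by (rule det_transpose) (use l len in auto)
  moreover have "det (transpose_mat (sm A rs cs)) = det (sm A rs cs)"
    by (rule det_transpose) (use l in auto)
  ultimately show ?thesis by (simp add: abs_mult abs_sign_of)
qed

definition shf :: "nat \<Rightarrow> nat \<Rightarrow> nat" where "shf i r = (if r < i then r else Suc r)"

lemma shf_neq[simp]: "shf i r \<noteq> i" by (simp add: shf_def)
lemma shf_neq2[simp]: "i \<noteq> shf i r" by (simp add: shf_def)

lemma pivot_index: "r < dim_row A \<Longrightarrow> c < dim_col A \<Longrightarrow> pivot_mat A i j $$ (r,c) =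
   (if r = i then A $$ (i,c) / A $$ (i,j) else A $$ (r,c) - (A $$ (r,j) / A $$ (i,j)) * A $$ (i,c))"
  by (simp add: pivot_mat_def)

lemma trim_index: "r < dim_row A - 1 \<Longrightarrow> c < dim_col A - 1 \<Longrightarrow>
   trim_mat A i j $$ (r,c) = pivot_mat A i j $$ (shf i r, shf j c)"
  by (simp add: trim_mat_def shf_def)

lemma trim_dim[simp]: "dim_row (trim_mat A i j) = dim_row A - 1" "dim_col (trim_mat A i j) = dim_col A - 1"
  by (auto simp: trim_mat_def)

lemma core:
  fixes A :: "real mat"
  assumes i: "i < dim_row A" and j: "j < dim_col A" and a: "A $$ (i,j) \<noteq> 0"
    and rs: "\<forall>r\<in>set rs. r < dim_row A - 1" and cs: "\<forall>c\<in>set cs. c < dim_col A - 1"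
    and l: "length cs = length rs"
  shows "det (sm (trim_mat A i j) rs cs) = det (sm A (i # map (shf i) rs) (j # map (shf j) cs)) / A $$ (i,j)"
proof -
  define k where "k = length rs"
  define R where "R = i # map (shf i) rs"
  define K where "K = j # map (shf j) cs"
  define a where "a = A $$ (i,j)"
  define B where "B = pivot_mat A i j"
  define N where "N = sm B R K"
  define M where "M = sm A R K"
  have lR: "length R = Suc k" and lK: "length K = Suc k" using l by (auto simp: R_def K_def k_def)
  have Rb: "R ! q < dim_row A" if q: "q < Suc k" for q
  proof (cases q)
    case (Suc q')
    hence q'l: "q' < length rs" using q by (simp add: k_def)
    moreover have "rs ! q' < dim_row A - 1" using rs nth_mem[OF q'l] by blast
    ultimately show ?thesis using Suc by (auto simp: R_def shf_def)
  qed (use i in \<open>simp add: R_def\<close>)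
  have Kb: "K ! q < dim_col A" if q: "q < Suc k" for q
  proof (cases q)
    case (Suc q')
    hence q'l: "q' < length cs" using q l by (simp add: k_def)
    moreover have "cs ! q' < dim_col A - 1" using cs nth_mem[OF q'l] by blast
    ultimately show ?thesis using Suc by (auto simp: K_def shf_def)
  qed (use j in \<open>simp add: K_def\<close>)
  have R0: "R ! 0 = i" and K0: "K ! 0 = j" by (auto simp: R_def K_def)
  have Rs: "\<And>q. 0 < q \<Longrightarrow> q < Suc k \<Longrightarrow> R ! q \<noteq> i"
    by (auto simp: R_def nth_Cons' k_def)
  have Nc: "N \<in> carrier_mat (Suc k) (Suc k)" and Mc: "M \<in> carrier_mat (Suc k) (Suc k)"
    using lR lK by (auto simp: N_def M_def)
  have del: "sm (trim_mat A i j) rs cs = mat_delete N 0 0"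
    using rs cs l unfolding N_def mat_delete_def
    by (auto intro!: eq_matI simp: lR lK R_def K_def trim_index B_def k_def)
  have col0: "\<And>q. q < Suc k \<Longrightarrow> N $$ (q,0) = (if q = 0 then 1 else 0)"
  proof -
    fix q assume q: "q < Suc k"
    show "N $$ (q,0) = (if q = 0 then 1 else 0)"
      using q Rb[OF q] Rs[of q] j a unfolding N_def B_def a_def
      by (auto simp: lR lK R0 K0 pivot_index)
  qed
  have "det N = (\<Sum>q<Suc k. N $$ (q,0) * cofactor N q 0)"
    by (rule laplace_expansion_column[OF Nc]) simp
  also have "\<dots> = cofactor N 0 0"
    by (subst sum.lessThan_Suc_shift) (simp add: col0)
  also have "\<dots> = det (sm (trim_mat A i j) rs cs)" by (simp add: cofactor_def del)
  finally have d1: "det N = det (sm (trim_mat A i j) rs cs)" .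
  define E where "E = mat (Suc k) (Suc k) (\<lambda>(x,y).
     (if y = 0 then (if x = 0 then 1/a else - A $$ (R!x, j) / a) else 0) + (if y = x \<and> x \<noteq> 0 then 1 else 0))"
  have Ec: "E \<in> carrier_mat (Suc k) (Suc k)" by (simp add: E_def)
  have NEM: "N = E * M"
  proof (rule eq_matI)
    fix x y assume x: "x < dim_row (E * M)" and y: "y < dim_col (E * M)"
    hence x': "x < Suc k" and y': "y < Suc k" using Ec Mc by auto
    have "(E * M) $$ (x,y) = (\<Sum>t<Suc k. E $$ (x,t) * M $$ (t,y))"
      using x' y' Ec Mc by (simp add: scalar_prod_def lessThan_atLeast0)
    also have "\<dots> = (\<Sum>t<Suc k. (if t = 0 then (if x = 0 then 1/a else - A $$ (R!x, j) / a) * M $$ (0,y) else 0)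
          + (if t = x then (if x \<noteq> 0 then M $$ (x,y) else 0) else 0))"
      using x' by (intro sum.cong) (auto simp: E_def algebra_simps)
    also have "\<dots> = (if x = 0 then 1/a else - A $$ (R!x, j) / a) * M $$ (0,y) + (if x \<noteq> 0 then M $$ (x,y) else 0)"
      using x' by (simp add: sum.distrib)
    also have "\<dots> = N $$ (x,y)"
      using x' y' Rb[OF x'] Kb[OF y'] Rs[of x] i unfolding N_def M_def B_def a_def
      by (auto simp: lR lK R0 pivot_index algebra_simps)
    finally show "N $$ (x,y) = (E * M) $$ (x,y)" by simp
  qed (use Ec Mc Nc in auto)
  have dE: "det E = 1/a"
  proof -
    have "det E = prod_list (diag_mat E)"
      by (rule det_lower_triangular[OF _ Ec]) (auto simp: E_def)
    also have "\<dots> = (\<Prod>x<Suc k. E $$ (x,x))" by (simp add: prod_list_diag_prod lessThan_atLeast0 E_def)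
    also have "\<dots> = 1/a" by (subst prod.lessThan_Suc_shift) (simp add: E_def)
    finally show ?thesis .
  qed
  have "det N = det M / a" using det_mult[OF Ec Mc] NEM dE by simp
  thus ?thesis using d1 by (simp add: M_def R_def K_def a_def)
qed

lemma sm_sm: assumes "\<forall>x\<in>set rs'. x < length rs" "\<forall>y\<in>set cs'. y < length cs"
  shows "sm (sm A rs cs) rs' cs' = sm A (map ((!) rs) rs') (map ((!) cs) cs')"
  using assms by (auto intro!: eq_matI)

lemma pl_sorted: "sorted (pl I)"
  unfolding pl_def sorted_iff_nth_mono
proof (intro allI impI)
  fix i j assume ij: "i \<le> j" "j < length (map (pick I) [0..<card I])"
  show "map (pick I) [0..<card I] ! i \<le> map (pick I) [0..<card I] ! j"
  proof (cases "i = j")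
    case False
    hence "pick I i < pick I j" using ij pick_mono_le[of j I i] by simp
    thus ?thesis using ij by simp
  qed simp
qed

lemma pl_sorted_list: "finite I \<Longrightarrow> pl I = sorted_list_of_set I"
  by (rule sorted_distinct_set_unique) (auto simp: pl_sorted pl_distinct pl_set)

lemma pl_upt: "pl {0..<n} = [0..<n]"
  by (simp add: pl_sorted_list)

lemma rows_of_sm: "R \<subseteq> {0..<dim_row A} \<Longrightarrow> rows_of A R = sm A (pl R) [0..<dim_col A]"
  unfolding rows_of_def by (simp add: submatrix_sm pl_upt)

lemma sm_perm:
  assumes "distinct rs" "distinct rs'" "set rs = set rs'" "distinct cs" "distinct cs'" "set cs = set cs'"
    "length cs = length rs"
  shows "\<bar>det (sm (A::real mat) rs' cs')\<bar> = \<bar>det (sm A rs cs)\<bar>"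
proof -
  have "length rs' = length rs" using assms distinct_card by metis
  hence "\<bar>det (sm A rs' cs')\<bar> = \<bar>det (sm A rs' cs)\<bar>"
    using sm_perm_cols[OF assms(4,5,6)] assms(7) by simp
  also have "\<dots> = \<bar>det (sm A rs cs)\<bar>" using sm_perm_rows[OF assms(1,2,3,7)] .
  finally show ?thesis .
qed

lemma lin_indep_sm:
  assumes li: "lin_indep_rows (A::real mat)" and d: "distinct rs" and s: "set rs \<subseteq> {0..<dim_row A}"
  shows "lin_indep_rows (sm A rs [0..<dim_col A])"
  unfolding lin_indep_rows_def
proof (rule allI, rule impI)
  fix c :: "nat \<Rightarrow> real"
  assume h: "\<forall>j<dim_col (sm A rs [0..<dim_col A]). (\<Sum>i<dim_row (sm A rs [0..<dim_col A]). c i * sm A rs [0..<dim_col A] $$ (i, j)) = 0"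
  define c' where "c' x = (if x \<in> set rs then c (idx rs x) else 0)" for x
  have "\<forall>j<dim_col A. (\<Sum>i<dim_row A. c' i * A $$ (i,j)) = 0"
  proof (intro allI impI)
    fix j assume j: "j < dim_col A"
    have "(\<Sum>i<dim_row A. c' i * A $$ (i,j)) = (\<Sum>i\<in>set rs. c (idx rs i) * A $$ (i,j))"
      using s by (intro sum.mono_neutral_cong_right) (auto simp: c'_def)
    also have "\<dots> = (\<Sum>q<length rs. c (idx rs (rs!q)) * A $$ (rs!q,j))"
      using d by (simp add: sum.distinct_set_conv_list sum_list_sum_nth lessThan_atLeast0)
    also have "\<dots> = (\<Sum>q<length rs. c q * sm A rs [0..<dim_col A] $$ (q,j))"
      using d j by (intro sum.cong) (auto simp: idx_distinct)
    finally show "(\<Sum>i<dim_row A. c' i * A $$ (i,j)) = 0" using h j by simp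
  qed
  hence z: "\<forall>i<dim_row A. c' i = 0" using li unfolding lin_indep_rows_def by blast
  show "\<forall>i<dim_row (sm A rs [0..<dim_col A]). c i = 0"
  proof (intro allI impI)
    fix q assume "q < dim_row (sm A rs [0..<dim_col A])"
    hence q: "q < length rs" by simp
    have "idx rs (rs!q) = q" using d q by (rule idx_distinct)
    moreover have "rs ! q < dim_row A" using s nth_mem[OF q] by auto
    ultimately show "c q = 0" using z[rule_format, of "rs!q"] nth_mem[OF q] unfolding c'_def by auto
  qed
qed

lemma sub_perm:
  assumes "distinct rs" "set rs \<subseteq> {0..<dim_row A}" "distinct cs" "set cs \<subseteq> {0..<dim_col A}"
    "length cs = length rs"
  shows "\<bar>det (submatrix (A::real mat) (set rs) (set cs))\<bar> = \<bar>det (sm A rs cs)\<bar>"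
proof -
  have "submatrix A (set rs) (set cs) = sm A (pl (set rs)) (pl (set cs))"
    using assms by (intro submatrix_sm) auto
  moreover have "\<bar>det (sm A (pl (set rs)) (pl (set cs)))\<bar> = \<bar>det (sm A rs cs)\<bar>"
    by (rule sm_perm) (use assms in \<open>auto simp: pl_distinct pl_set\<close>)
  ultimately show ?thesis by simp
qed

lemma te_list:
  assumes te: "totally_equimodular (A::real mat)" and li: "lin_indep_rows A"
    and d: "distinct rs" "set rs \<subseteq> {0..<dim_row A}"
    and c1: "distinct cs1" "set cs1 \<subseteq> {0..<dim_col A}" "length cs1 = length rs"
    and c2: "distinct cs2" "set cs2 \<subseteq> {0..<dim_col A}" "length cs2 = length rs"
    and nz: "det (sm A rs cs1) \<noteq> 0" "det (sm A rs cs2) \<noteq> 0"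
  shows "\<bar>det (sm A rs cs1)\<bar> = \<bar>det (sm A rs cs2)\<bar>"
proof -
  have li': "lin_indep_rows (rows_of A (set rs))"
    using d by (simp add: rows_of_sm lin_indep_sm[OF li] pl_distinct pl_set)
  have e1: "\<bar>det (submatrix A (set rs) (set cs1))\<bar> = \<bar>det (sm A rs cs1)\<bar>"
    by (rule sub_perm) (use d c1 in auto)
  have e2: "\<bar>det (submatrix A (set rs) (set cs2))\<bar> = \<bar>det (sm A rs cs2)\<bar>"
    by (rule sub_perm) (use d c2 in auto)
  have cards: "card (set cs1) = card (set rs)" "card (set cs2) = card (set rs)"
    using d c1 c2 by (auto simp: distinct_card)
  have "det (submatrix A (set rs) (set cs1)) \<noteq> 0" "det (submatrix A (set rs) (set cs2)) \<noteq> 0"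
    using e1 e2 nz by auto
  hence "\<bar>det (submatrix A (set rs) (set cs1))\<bar> = \<bar>det (submatrix A (set rs) (set cs2))\<bar>"
    using te li' d c1 c2 cards unfolding totally_equimodular_def by blast
  thus ?thesis using e1 e2 by simp
qed

lemma abs_in01: "(x::real) \<in> {-1,0,1} \<longleftrightarrow> \<bar>x\<bar> \<in> {0,1}"
  by auto

lemma tu_list:
  assumes tu: "totally_unimodular (rows_of (A::real mat) R)" and R: "R \<subseteq> {0..<dim_row A}"
    and d: "distinct rs" "set rs \<subseteq> R" and c: "distinct cs" "set cs \<subseteq> {0..<dim_col A}"
    and l: "length cs = length rs"
  shows "det (sm A rs cs) \<in> {-1,0,1}"
proof -
  define P where "P = pl R"
  define Q where "Q = rows_of A R"
  have fR: "finite R" using R finite_subset by blast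
  have P: "distinct P" "set P = R" using fR by (auto simp: P_def pl_distinct pl_set)
  have Q: "Q = sm A P [0..<dim_col A]" using R by (simp add: Q_def P_def rows_of_sm)
  define rs' where "rs' = map (idx P) rs"
  have rs'b: "\<forall>x\<in>set rs'. x < length P" using d P by (auto simp: rs'_def intro!: idx_less)
  have "sm Q rs' cs = sm A (map ((!) P) rs') (map ((!) [0..<dim_col A]) cs)"
    unfolding Q using rs'b c by (intro sm_sm) auto
  also have "map ((!) P) rs' = rs" using d P by (auto simp: rs'_def idx_nth intro!: map_idI)
  also have "map ((!) [0..<dim_col A]) cs = cs" using c by (auto intro!: map_idI)
  finally have eq: "sm Q rs' cs = sm A rs cs" .
  have drs': "distinct rs'" unfolding rs'_def distinct_map using d P
    by (auto simp: inj_on_def) (metis idx_nth subsetD)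
  have "\<bar>det (submatrix Q (set rs') (set cs))\<bar> = \<bar>det (sm Q rs' cs)\<bar>"
    by (rule sub_perm) (use drs' rs'b c l Q P in \<open>auto simp: rs'_def\<close>)
  moreover have "det (submatrix Q (set rs') (set cs)) \<in> {-1,0,1}"
  proof -
    have "card (set rs') = length rs'" by (rule distinct_card[OF drs'])
    hence "card (set rs') = card (set cs)" using c l by (simp add: distinct_card rs'_def)
    moreover have "set rs' \<subseteq> {0..<dim_row Q}" "set cs \<subseteq> {0..<dim_col Q}"
      using rs'b c Q by auto
    ultimately have "set rs' \<subseteq> {0..<dim_row Q} \<and> set cs \<subseteq> {0..<dim_col Q} \<and> card (set rs') = card (set cs)" by simp
    thus ?thesis using tu unfolding totally_unimodular_def Q_def[symmetric] by blast
  qed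
  ultimately show ?thesis unfolding eq by (simp only: abs_in01)
qed

lemma smult_one_mult_vec: "(v :: real vec) \<in> carrier_vec k \<Longrightarrow> (c \<cdot>\<^sub>m 1\<^sub>m k) *\<^sub>v v = c \<cdot>\<^sub>v v"
proof (intro eq_vecI)
  fix q assume v: "v \<in> carrier_vec k" and q: "q < dim_vec (c \<cdot>\<^sub>v v)"
  hence q': "q < k" by simp
  have "((c \<cdot>\<^sub>m 1\<^sub>m k) *\<^sub>v v) $ q = (\<Sum>i = 0..<k. c * (if i = q then 1 else 0) * v $ i)"
    using q' v by (auto simp: scalar_prod_def)
  also have "\<dots> = (\<Sum>i = 0..<k. if i = q then c * v $ i else 0)" by (intro sum.cong) auto
  also have "\<dots> = c * v $ q" using q' by (simp add: sum.delta')
  finally show "((c \<cdot>\<^sub>m 1\<^sub>m k) *\<^sub>v v) $ q = (c \<cdot>\<^sub>v v) $ q" using q' v by simp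
qed (auto)

lemma extend:
  fixes A :: "real mat"
  assumes d: "det (sm A rs cs) \<noteq> 0" and l: "length cs = length rs"
    and q: "q < length rs" and aq: "A $$ (rs!q, j) \<noteq> 0"
  shows "\<exists>t<length rs. det (sm A rs (cs[t := j])) \<noteq> 0"
proof (rule ccontr)
  assume H: "\<not> ?thesis"
  define k where "k = length rs"
  define M where "M = sm A rs cs"
  have Mdim: "dim_row M = k" "dim_col M = k" unfolding M_def k_def using l by simp_all
  have Mc: "M \<in> carrier_mat k k" using Mdim by (intro carrier_matI)
  define b where "b = vec k (\<lambda>q. A $$ (rs!q, j))"
  have bc: "b \<in> carrier_vec k" by (simp add: b_def)
  define x where "x = (1 / det M) \<cdot>\<^sub>v (adj_mat M *\<^sub>v b)"
  have adj: "adj_mat M \<in> carrier_mat k k" "M * adj_mat M = det M \<cdot>\<^sub>m 1\<^sub>m k" using adj_mat[OF Mc] by auto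
  have xc: "x \<in> carrier_vec k" using adj bc by (simp add: x_def)
  have Mx: "M *\<^sub>v x = b"
  proof -
    have 1: "M *\<^sub>v x = (1 / det M) \<cdot>\<^sub>v (M *\<^sub>v (adj_mat M *\<^sub>v b))"
      unfolding x_def by (rule mult_mat_vec[OF Mc]) (use adj bc in auto)
    have 2: "M *\<^sub>v (adj_mat M *\<^sub>v b) = (M * adj_mat M) *\<^sub>v b"
      by (rule assoc_mult_mat_vec[symmetric, OF Mc adj(1) bc])
    have 3: "(M * adj_mat M) *\<^sub>v b = det M \<cdot>\<^sub>v b" unfolding adj(2) by (rule smult_one_mult_vec[OF bc])
    have "det M \<noteq> 0" using d by (simp add: M_def)
    thus ?thesis unfolding 1 2 3 smult_smult_assoc by simp
  qed
  have "\<forall>t<k. x $ t = 0"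
  proof (intro allI impI)
    fix t assume t: "t < k"
    have "det (replace_col M (M *\<^sub>v x) t) = x $ t * det M" by (rule cramer_lemma_mat[OF Mc xc t])
    moreover have "replace_col M (M *\<^sub>v x) t = sm A rs (cs[t := j])"
      unfolding Mx using l t by (auto intro!: eq_matI simp: replace_col_def M_def b_def k_def nth_list_update)
    moreover have "det (sm A rs (cs[t := j])) = 0" using H t by (auto simp: k_def)
    ultimately show "x $ t = 0" using d by (simp add: M_def)
  qed
  hence "x = 0\<^sub>v k" using xc by (intro eq_vecI) auto
  hence "b = M *\<^sub>v 0\<^sub>v k" using Mx by simp
  also have "M *\<^sub>v 0\<^sub>v k = 0\<^sub>v k" by (intro eq_vecI) (use Mc in \<open>auto simp: scalar_prod_def\<close>)
  finally have "b = 0\<^sub>v k" .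
  hence "b $ q = 0" using q by (simp add: k_def)
  thus False using aq q by (simp add: b_def k_def)
qed

lemma inj_shf: "inj (shf i)" by (auto simp: inj_def shf_def split: if_splits)

lemma shf_less: "i < m \<Longrightarrow> r < m - 1 \<Longrightarrow> shf i r < m" by (auto simp: shf_def)

locale piv =
  fixes A :: "real mat" and i j :: nat
  assumes lace: "te_lace A" and m3: "dim_row A \<ge> 3"
    and i: "i < dim_row A" and j: "j < dim_col A" and a0: "A $$ (i,j) \<noteq> 0"
begin

abbreviation "C \<equiv> trim_mat A i j"
abbreviation "m \<equiv> dim_row A"
abbreviation "n \<equiv> dim_col A"

lemma zpo: "zero_pm_one A" and liA: "lin_indep_rows A" and teA: "totally_equimodular A"
  and ntu: "\<not> totally_unimodular A"
  and subtu: "\<And>R. R \<subset> {0..<m} \<Longrightarrow> tu_set (rows_of A R)"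
  using lace by (auto simp: te_lace_def te_set_def tu_set_def)

lemma a1: "\<bar>A $$ (i,j)\<bar> = 1"
proof -
  have "A $$ (i,j) \<in> {-1,0,1}" using zpo i j unfolding zero_pm_one_def by blast
  thus ?thesis using a0 by auto
qed

lemma minor:
  assumes rs: "distinct rs" "\<forall>r\<in>set rs. r < m - 1" and cs: "distinct cs" "\<forall>c\<in>set cs. c < n - 1"
    and l: "length cs = length rs"
  shows "\<bar>det (sm C rs cs)\<bar> = \<bar>det (sm A (i # map (shf i) rs) (j # map (shf j) cs))\<bar>"
    and "distinct (i # map (shf i) rs)" "set (i # map (shf i) rs) \<subseteq> {0..<m}"
    and "distinct (j # map (shf j) cs)" "set (j # map (shf j) cs) \<subseteq> {0..<n}"
    and "length (j # map (shf j) cs) = length (i # map (shf i) rs)"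
proof -
  show "\<bar>det (sm C rs cs)\<bar> = \<bar>det (sm A (i # map (shf i) rs) (j # map (shf j) cs))\<bar>"
    using core[OF i j a0 rs(2) cs(2) l] a1 by (simp add: abs_div)
  show "distinct (i # map (shf i) rs)" "distinct (j # map (shf j) cs)"
    using rs cs inj_shf by (auto simp: distinct_map inj_on_def inj_def)
  show "set (i # map (shf i) rs) \<subseteq> {0..<m}" using rs i shf_less[of i m] by auto
  show "set (j # map (shf j) cs) \<subseteq> {0..<n}" using cs j shf_less[of j n] by auto
  show "length (j # map (shf j) cs) = length (i # map (shf i) rs)" using l by simp
qed

lemma zpoC: "zero_pm_one C"
  unfolding zero_pm_one_def
proof (intro allI impI)
  fix r c assume r: "r < dim_row C" and c: "c < dim_col C"
  have e: "C $$ (r,c) = det (sm C [r] [c])"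
    by (subst det_single) (use r c in auto)
  note mi = minor[of "[r]" "[c]"]
  have "{i, shf i r} \<subset> {0..<m}"
  proof -
    have "{i, shf i r} \<subseteq> {0..<m}" using r i shf_less by auto
    moreover have "{i, shf i r} \<noteq> {0..<m}"
    proof
      assume "{i, shf i r} = {0..<m}"
      moreover have "card {i, shf i r} \<le> 2" by (simp add: card_insert_if)
      ultimately have "card {0..<m} \<le> 2" by simp
      thus False using m3 by simp
    qed
    ultimately show ?thesis by blast
  qed
  hence tu: "totally_unimodular (rows_of A {i, shf i r})" using subtu by (simp add: tu_set_def)
  have "det (sm A [i, shf i r] [j, shf j c]) \<in> {-1,0,1}"
    using mi r c i shf_less[of i m r] by (intro tu_list[OF tu]) auto
  thus "C $$ (r,c) \<in> {-1,0,1}" using mi r c unfolding e by (simp only: abs_in01) simp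
qed


lemma sum_split_i:
  "(\<Sum>x<m. f x) = f i + (\<Sum>r<m-1. f (shf i r))"
proof -
  have set: "{..<m} = insert i (shf i ` {..<m-1})"
  proof (rule subset_antisym)
    show "{..<m} \<subseteq> insert i (shf i ` {..<m-1})"
    proof
      fix x assume x: "x \<in> {..<m}"
      show "x \<in> insert i (shf i ` {..<m-1})"
      proof (cases "x = i")
        case False
        hence "x = shf i (if x < i then x else x - 1)" "(if x < i then x else x - 1) < m - 1"
          using x i by (auto simp: shf_def)
        thus ?thesis by blast
      qed simp
    qed
  qed (use i shf_less[of i m] in auto)
  have "(\<Sum>x<m. f x) = f i + sum f (shf i ` {..<m-1})"
    unfolding set by (subst sum.insert) auto
  also have "sum f (shf i ` {..<m-1}) = (\<Sum>r<m-1. f (shf i r))"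
    using inj_shf by (subst sum.reindex) (auto simp: inj_on_def inj_def)
  finally show ?thesis .
qed

lemma liC: "lin_indep_rows C"
  unfolding lin_indep_rows_def
proof (rule allI, rule impI)
  fix c :: "nat \<Rightarrow> real"
  assume h0: "\<forall>col<dim_col C. (\<Sum>r<dim_row C. c r * C $$ (r, col)) = 0"
  have h: "\<And>col. col < n - 1 \<Longrightarrow> (\<Sum>r<m-1. c r * C $$ (r, col)) = 0" using h0 by simp
  define a where "a = A $$ (i,j)"
  define S where "S = (\<Sum>r<m-1. c r * A $$ (shf i r, j))"
  define c' where "c' x = (if x = i then - S / a else c (if x < i then x else x - 1))" for x
  have c'sh: "c' (shf i r) = c r" for r by (auto simp: c'_def shf_def)
  have "\<forall>col<n. (\<Sum>x<m. c' x * A $$ (x,col)) = 0"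
  proof (intro allI impI)
    fix col assume col: "col < n"
    have "(\<Sum>x<m. c' x * A $$ (x,col)) = c' i * A $$ (i,col) + (\<Sum>r<m-1. c r * A $$ (shf i r, col))"
      by (subst sum_split_i) (simp add: c'sh)
    also have "\<dots> = 0"
    proof (cases "col = j")
      case True
      thus ?thesis using a0 by (simp add: c'_def S_def a_def)
    next
      case False
      define c0 where "c0 = (if col < j then col else col - 1)"
      have c0: "c0 < n - 1" "shf j c0 = col" using False col j by (auto simp: c0_def shf_def)
      have "(\<Sum>r<m-1. c r * A $$ (shf i r, col)) =
            (\<Sum>r<m-1. c r * C $$ (r, c0) + A $$ (i,col) / a * (c r * A $$ (shf i r, j)))"
      proof (rule sum.cong[OF refl])
        fix r assume r: "r \<in> {..<m-1}"
        have e: "C $$ (r,c0) = A $$ (shf i r, col) - A $$ (shf i r, j) / a * A $$ (i, col)"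
          using r c0 col i shf_less[of i m r] by (simp add: trim_index pivot_index a_def)
        show "c r * A $$ (shf i r, col) = c r * C $$ (r, c0) + A $$ (i,col) / a * (c r * A $$ (shf i r, j))"
          unfolding e by (simp add: divide_inverse algebra_simps)
      qed
      also have "\<dots> = A $$ (i,col) / a * S"
        using h[OF c0(1)] by (simp add: sum.distrib S_def sum_distrib_left)
      finally show ?thesis by (simp add: c'_def)
    qed
    finally show "(\<Sum>x<m. c' x * A $$ (x,col)) = 0" .
  qed
  hence z: "\<forall>x<m. c' x = 0" using liA unfolding lin_indep_rows_def by blast
  show "\<forall>r<dim_row C. c r = 0"
  proof (intro allI impI)
    fix r assume "r < dim_row C"
    hence "shf i r < m" using i shf_less[of i m r] by simp
    thus "c r = 0" using z c'sh[of r] by simp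
  qed
qed


lemma teC: "totally_equimodular C"
  unfolding totally_equimodular_def
proof (intro allI impI)
  fix R J1 J2
  assume R: "R \<subseteq> {0..<dim_row C}"
  assume H: "J1 \<subseteq> {0..<dim_col C} \<and> J2 \<subseteq> {0..<dim_col C} \<and> card J1 = card R \<and> card J2 = card R \<and>
       det (submatrix C R J1) \<noteq> 0 \<and> det (submatrix C R J2) \<noteq> 0"
  have fin: "finite R" "finite J1" "finite J2" using R H finite_subset by blast+
  have e1: "submatrix C R J1 = sm C (pl R) (pl J1)" and e2: "submatrix C R J2 = sm C (pl R) (pl J2)"
    using R H by (auto intro!: submatrix_sm)
  have bR: "\<forall>r\<in>set (pl R). r < m - 1" using R fin by (auto simp: pl_set)
  have b1: "\<forall>r\<in>set (pl J1). r < n - 1" and b2: "\<forall>r\<in>set (pl J2). r < n - 1"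
    using H fin by (auto simp: pl_set)
  note m1 = minor[OF pl_distinct bR pl_distinct b1] and m2 = minor[OF pl_distinct bR pl_distinct b2]
  have l1: "length (pl J1) = length (pl R)" and l2: "length (pl J2) = length (pl R)" using H by auto
  have nz: "det (sm C (pl R) (pl J1)) \<noteq> 0" "det (sm C (pl R) (pl J2)) \<noteq> 0" using H e1 e2 by auto
  have "\<bar>det (sm A (i # map (shf i) (pl R)) (j # map (shf j) (pl J1)))\<bar> =
        \<bar>det (sm A (i # map (shf i) (pl R)) (j # map (shf j) (pl J2)))\<bar>"
    by (rule te_list[OF teA liA]) (use m1[OF l1] m2[OF l2] nz in auto)
  thus "\<bar>det (submatrix C R J1)\<bar> = \<bar>det (submatrix C R J2)\<bar>"
    unfolding e1 e2 using m1(1)[OF l1] m2(1)[OF l2] by simp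
qed

lemma tuC: assumes R: "R \<subset> {0..<m-1}" shows "tu_set (rows_of C R)"
proof -
  have R': "R \<subseteq> {0..<dim_row C}" using R by auto
  have fR: "finite R" using R finite_subset by blast
  define P where "P = pl R"
  have P: "distinct P" "set P = R" using fR by (auto simp: P_def pl_distinct pl_set)
  have Q: "rows_of C R = sm C P [0..<n-1]" using rows_of_sm[OF R'] by (simp add: P_def)
  have zq: "zero_pm_one (rows_of C R)"
    unfolding zero_pm_one_def
  proof (intro allI impI)
    fix a b assume a: "a < dim_row (rows_of C R)" and b: "b < dim_col (rows_of C R)"
    have "P ! a \<in> R" using a P Q by (metis nth_mem sm_dim(1))
    hence "P ! a < m - 1" using R by auto
    moreover have "b < n - 1" using b Q by simp
    ultimately have "C $$ (P ! a, b) \<in> {-1,0,1}" using zpoC unfolding zero_pm_one_def by simp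
    thus "rows_of C R $$ (a,b) \<in> {-1,0,1}" using a b Q by simp
  qed
  have lq: "lin_indep_rows (rows_of C R)"
    unfolding Q using lin_indep_sm[OF liC P(1)] P R by auto
  obtain r0 where "r0 \<in> {0..<m-1} - R" using R by blast
  hence r0: "r0 < m - 1" "r0 \<notin> R" by auto
  define R2 where "R2 = insert i (shf i ` R)"
  have R2: "R2 \<subset> {0..<m}"
  proof -
    have "R2 \<subseteq> {0..<m}" using R i shf_less[of i m] by (auto simp: R2_def)
    moreover have "shf i r0 \<notin> R2" using r0 inj_shf by (auto simp: R2_def inj_def)
    moreover have "shf i r0 < m" using r0 i shf_less by auto
    ultimately show ?thesis by auto
  qed
  have tu2: "totally_unimodular (rows_of A R2)" using subtu[OF R2] by (simp add: tu_set_def)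
  have "totally_unimodular (rows_of C R)"
    unfolding totally_unimodular_def
  proof (intro allI impI)
    fix I J assume H: "I \<subseteq> {0..<dim_row (rows_of C R)} \<and> J \<subseteq> {0..<dim_col (rows_of C R)} \<and> card I = card J"
    have fin: "finite I" "finite J" using H finite_subset by blast+
    have I: "\<forall>x\<in>set (pl I). x < length P" using H Q fin by (auto simp: pl_set)
    have J: "\<forall>x\<in>set (pl J). x < n - 1" using H Q fin by (auto simp: pl_set)
    define rs where "rs = map ((!) P) (pl I)"
    have "submatrix (rows_of C R) I J = sm (sm C P [0..<n-1]) (pl I) (pl J)"
      using H Q by (auto intro!: submatrix_sm)
    also have "\<dots> = sm C rs (map ((!) [0..<n-1]) (pl J))"
      unfolding rs_def using I J by (intro sm_sm) auto
    also have "map ((!) [0..<n-1]) (pl J) = pl J" using J by (auto intro!: map_idI)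
    finally have e: "submatrix (rows_of C R) I J = sm C rs (pl J)" .
    have drs: "distinct rs" unfolding rs_def distinct_map using I P pl_distinct
      by (auto simp: inj_on_def nth_eq_iff_index_eq)
    have srs: "set rs \<subseteq> R" using I P by (auto simp: rs_def)
    have brs: "\<forall>r\<in>set rs. r < m - 1" using srs R by auto
    have l: "length (pl J) = length rs" using H by (simp add: rs_def)
    note mi = minor[OF drs brs pl_distinct J l]
    have "det (sm A (i # map (shf i) rs) (j # map (shf j) (pl J))) \<in> {-1,0,1}"
      by (rule tu_list[OF tu2]) (use R2 mi srs in \<open>auto simp: R2_def\<close>)
    thus "det (submatrix (rows_of C R) I J) \<in> {-1,0,1}" unfolding e abs_in01 using mi(1) by simp
  qed
  thus ?thesis using zq lq by (simp add: tu_set_def)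
qed


lemma ntuC: "\<not> totally_unimodular C"
proof
  assume tuC: "totally_unimodular C"
  obtain I J where IJ: "I \<subseteq> {0..<m}" "J \<subseteq> {0..<n}" "card I = card J"
    and dI: "det (submatrix A I J) \<notin> {-1,0,1}"
    using ntu unfolding totally_unimodular_def by blast
  have fin: "finite I" "finite J" using IJ finite_subset by blast+
  have eIJ: "submatrix A I J = sm A (pl I) (pl J)" using IJ by (intro submatrix_sm) auto
  have Ifull: "I = {0..<m}"
  proof (rule ccontr)
    assume "I \<noteq> {0..<m}"
    hence "I \<subset> {0..<m}" using IJ by auto
    hence tuI: "totally_unimodular (rows_of A I)" using subtu by (simp add: tu_set_def)
    have "det (sm A (pl I) (pl J)) \<in> {-1,0,1}"
      by (rule tu_list[OF tuI]) (use IJ fin in \<open>auto simp: pl_distinct pl_set\<close>)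
    thus False using dI eIJ by simp
  qed
  define cs where "cs = pl J"
  have cs: "distinct cs" "set cs \<subseteq> {0..<n}" "length cs = m"
    using IJ fin Ifull by (auto simp: cs_def pl_distinct pl_set)
  have d: "det (sm A [0..<m] cs) \<notin> {-1,0,1}" using dI eIJ Ifull by (simp add: cs_def pl_upt)
  obtain cs' where cs': "distinct cs'" "set cs' \<subseteq> {0..<n}" "length cs' = m" "j \<in> set cs'"
    and d': "det (sm A [0..<m] cs') \<noteq> 0"
  proof (cases "j \<in> set cs")
    case True
    thus ?thesis using that cs d by auto
  next
    case False
    have "\<exists>t<length [0..<m]. det (sm A [0..<m] (cs[t := j])) \<noteq> 0"
      by (rule extend[of A "[0..<m]" cs i j]) (use d cs i a0 in auto)
    then obtain t where t: "t < m" "det (sm A [0..<m] (cs[t := j])) \<noteq> 0" by auto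
    show ?thesis
    proof (rule that[of "cs[t := j]"])
      show "distinct (cs[t := j])" using cs False by (simp add: distinct_list_update)
      show "set (cs[t := j]) \<subseteq> {0..<n}" using cs j set_update_subset_insert[of cs t j] by auto
      show "length (cs[t := j]) = m" using cs by simp
      show "j \<in> set (cs[t := j])" using t cs by (simp add: set_update_memI)
    qed (use t in auto)
  qed
  have dm: "distinct [0..<m]" "set [0..<m] \<subseteq> {0..<m}" by auto
  have eqd: "\<bar>det (sm A [0..<m] cs')\<bar> = \<bar>det (sm A [0..<m] cs)\<bar>"
    by (rule te_list[OF teA liA dm]) (use cs cs' d' d in auto)
  define unsh where "unsh c = (if c < j then c else c - 1)" for c
  define csR where "csR = remove1 j cs'"
  have csR: "distinct csR" "set csR = set cs' - {j}" "length csR = m - 1"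
    using cs' by (auto simp: csR_def length_remove1)
  define csC where "csC = map unsh csR"
  have shun: "shf j (unsh c) = c" if c: "c \<in> set csR" for c
  proof -
    have "c \<noteq> j" using c csR(2) by blast
    thus ?thesis by (auto simp: shf_def unsh_def)
  qed
  have mapC: "map (shf j) csC = csR" unfolding csC_def map_map o_def
    by (rule map_idI) (rule shun)
  have dC: "distinct csC" unfolding csC_def distinct_map
    using csR(1) inj_on_inverseI[of csR_set unsh "shf j" for csR_set] shun
    by (metis inj_on_inverseI)
  have bC: "\<forall>c\<in>set csC. c < n - 1"
  proof
    fix c assume "c \<in> set csC"
    then obtain c0 where c0: "c0 \<in> set csR" "c = unsh c0" by (auto simp: csC_def)
    hence "c0 \<noteq> j" "c0 < n" using csR(2) cs'(2) by auto
    thus "c < n - 1" using c0(2) j by (auto simp: unsh_def)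
  qed
  have lC: "length csC = length [0..<m-1]" using csR by (simp add: csC_def)
  note mi = minor[of "[0..<m-1]" csC, OF _ _ dC bC lC]
  have mi1: "\<bar>det (sm C [0..<m-1] csC)\<bar> = \<bar>det (sm A (i # map (shf i) [0..<m-1]) (j # csR))\<bar>"
    using mi(1) mapC by simp
  have rset: "set (i # map (shf i) [0..<m-1]) = set [0..<m]"
  proof -
    have "set (i # map (shf i) [0..<m-1]) \<subseteq> {0..<m}" using mi(3) by simp
    moreover have "card (set (i # map (shf i) [0..<m-1])) = m"
      using mi(2) distinct_card[OF mi(2)] m3 by simp
    ultimately show ?thesis by (simp add: card_subset_eq)
  qed
  have cset: "set (j # csR) = set cs'" using csR cs' by auto
  have "\<bar>det (sm A (i # map (shf i) [0..<m-1]) (j # csR))\<bar> = \<bar>det (sm A [0..<m] cs')\<bar>"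
    by (rule sm_perm) (use rset cset mi csR cs' mapC in auto)
  moreover have dabs: "\<bar>det (sm A [0..<m] cs)\<bar> \<notin> {0,1}" using d abs_in01[of "det (sm A [0..<m] cs)"] by blast
  ultimately have dCabs: "\<bar>det (sm C [0..<m-1] csC)\<bar> \<notin> {0,1}"
    using mi1 eqd by simp
  have "\<bar>det (submatrix C (set [0..<m-1]) (set csC))\<bar> = \<bar>det (sm C [0..<m-1] csC)\<bar>"
    by (rule sub_perm) (use dC bC lC in auto)
  moreover have "det (submatrix C (set [0..<m-1]) (set csC)) \<in> {-1,0,1}"
  proof -
    have "card (set [0..<m-1]) = card (set csC)" using lC distinct_card[OF dC] by simp
    moreover have "set [0..<m-1] \<subseteq> {0..<dim_row C}" "set csC \<subseteq> {0..<dim_col C}" using bC by auto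
    ultimately show ?thesis using tuC unfolding totally_unimodular_def by blast
  qed
  ultimately show False using dCabs abs_in01 by simp
qed

end


theorem mainTheorem6:
  fixes A :: "real mat" and i j :: nat
  assumes "te_lace A"
    and "dim_row A \<ge> 3"
    and "i < dim_row A" and "j < dim_col A"
    and "A $$ (i,j) \<noteq> 0"
  shows "te_lace (trim_mat A i j)"
proof -
  interpret piv A i j using assms by unfold_locales
  have "\<forall>R. R \<subset> {0..<dim_row (trim_mat A i j)} \<longrightarrow> tu_set (rows_of (trim_mat A i j) R)"
    using tuC by simp
  thus ?thesis unfolding te_lace_def te_set_def tu_set_def using zpoC liC teC ntuC by blast
qed

end
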